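(* If a structure $M$ simply interprets a structure $N$ over $\emptyset$ and $\mathrm{Th}(M)$ is dp-small, then $\mathrm{Th}(N)$ is dp-small.
   Context: Let $M$, $N$ be structures in possibly different languages. For $A\subseteq M$, $M$ simply interprets $N$ over $A$ if there are an $A$-definable set $S\subseteq M$ (a subset of the home sort, i.e. of $M$ itself) and an $A$-definable equivalence relation $E\subseteq M\times M$ on $S$ such that the elements of $N$ are in bijection with $S/E$ and the relations on $S$ induced via this bijection by the relations and functions of $N$ are $A$-definable in $M$. For a complete theory $T$ in language $L$ with monster model $\mathcal{U}$ ($\mathcal{U}_y$ the $|y|$-tuples from $\mathcal{U}$): a partial type $\pi(x)$ is dp-small if there do not exist $L(\mathcal{U})$-formulas $\varphi_i(x)$ ($i<\omega$), an $L$-formula $\psi(x;y)$ and $b_j\in\mathcal{U}_y$ ($j<\omega$) such that for all $i_0,j_0<\omega$ the type $\pi(x)\cup\{\varphi_{i_0}(x),\psi(x;b_{j_0})\}\cup\{\neg\varphi_i(x): i\ne i_0\}\cup\{\neg\psi(x;b_j): j\neq j_0\}$ is consistent. $T$ is dp-small if $x=x$ is dp-small for $x$ a single variable. *)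

theory Defs
  imports Main
begin

datatype 'f trm = Var nat | Fn 'f "'f trm list"

datatype ('f, 'r) fm =
    Eq "'f trm" "'f trm"
  | Rel 'r "'f trm list"
  | Neg "('f, 'r) fm"
  | Conj "('f, 'r) fm" "('f, 'r) fm"
  | Ex nat "('f, 'r) fm"

text \<open>A language is given by the arities of its function symbols (constants
  are 0-ary functions) and of its relation symbols.\<close>
type_synonym ('f, 'r) lang = "('f \<Rightarrow> nat) \<times> ('r \<Rightarrow> nat)"

type_synonym ('f, 'r, 'a) struc = "('f \<Rightarrow> 'a list \<Rightarrow> 'a) \<times> ('r \<Rightarrow> 'a list \<Rightarrow> bool)"

fun wf_trm :: "('f \<Rightarrow> nat) \<Rightarrow> 'f trm \<Rightarrow> bool" where
  "wf_trm ar (Var n) = True"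
| "wf_trm ar (Fn f ts) = (length ts = ar f \<and> (\<forall>t\<in>set ts. wf_trm ar t))"

fun wf_fm :: "('f, 'r) lang \<Rightarrow> ('f, 'r) fm \<Rightarrow> bool" where
  "wf_fm L (Eq s t) = (wf_trm (fst L) s \<and> wf_trm (fst L) t)"
| "wf_fm L (Rel r ts) = (length ts = snd L r \<and> (\<forall>t\<in>set ts. wf_trm (fst L) t))"
| "wf_fm L (Neg p) = wf_fm L p"
| "wf_fm L (Conj p q) = (wf_fm L p \<and> wf_fm L q)"
| "wf_fm L (Ex n p) = wf_fm L p"

fun fv_trm :: "'f trm \<Rightarrow> nat set" where
  "fv_trm (Var n) = {n}"
| "fv_trm (Fn f ts) = (\<Union>t\<in>set ts. fv_trm t)"

fun fv_fm :: "('f, 'r) fm \<Rightarrow> nat set" where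
  "fv_fm (Eq s t) = fv_trm s \<union> fv_trm t"
| "fv_fm (Rel r ts) = (\<Union>t\<in>set ts. fv_trm t)"
| "fv_fm (Neg p) = fv_fm p"
| "fv_fm (Conj p q) = fv_fm p \<union> fv_fm q"
| "fv_fm (Ex n p) = fv_fm p - {n}"

fun eval_trm :: "('f \<Rightarrow> 'a list \<Rightarrow> 'a) \<Rightarrow> (nat \<Rightarrow> 'a) \<Rightarrow> 'f trm \<Rightarrow> 'a" where
  "eval_trm F e (Var n) = e n"
| "eval_trm F e (Fn f ts) = F f (map (eval_trm F e) ts)"

fun sat :: "('f, 'r, 'a) struc \<Rightarrow> (nat \<Rightarrow> 'a) \<Rightarrow> ('f, 'r) fm \<Rightarrow> bool" where
  "sat M e (Eq s t) = (eval_trm (fst M) e s = eval_trm (fst M) e t)"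
| "sat M e (Rel r ts) = snd M r (map (eval_trm (fst M) e) ts)"
| "sat M e (Neg p) = (\<not> sat M e p)"
| "sat M e (Conj p q) = (sat M e p \<and> sat M e q)"
| "sat M e (Ex n p) = (\<exists>a. sat M (e(n := a)) p)"

text \<open>A set X of k-tuples (lists of length k) is \<emptyset>-definable in M (language L)
  if it is defined by an L-formula without parameters whose free variables
  are among 0, ..., k-1 (variable i standing for the i-th coordinate).\<close>
definition definable0 :: "('f, 'r) lang \<Rightarrow> ('f, 'r, 'a) struc \<Rightarrow> nat \<Rightarrow> 'a list set \<Rightarrow> bool" where
  "definable0 L M k X \<longleftrightarrow>
     (\<exists>\<phi>. wf_fm L \<phi> \<and> fv_fm \<phi> \<subseteq> {..<k} \<and>
          X = {as. length as = k \<and> sat M (\<lambda>i. as ! i) \<phi>})"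

text \<open>M (language LM, universe 'a) simply interprets N (language LN, universe 'b)
  over \<emptyset>: an \<emptyset>-definable S \<subseteq> M, an \<emptyset>-definable equivalence relation E on S,
  a bijection h : S/E \<rightarrow> N, such that the pull-backs along s \<mapsto> h([s]_E) of all
  relations of N and of the graphs of all functions of N are \<emptyset>-definable in M.\<close>
definition simply_interprets0 ::
  "('f, 'r) lang \<Rightarrow> ('f, 'r, 'a) struc \<Rightarrow> ('g, 's) lang \<Rightarrow> ('g, 's, 'b) struc \<Rightarrow> bool" where
  "simply_interprets0 LM M LN N \<longleftrightarrow>
     (\<exists>S E h.
        definable0 LM M 1 {[s] | s. s \<in> S} \<and>
        equiv S E \<and>
        definable0 LM M 2 {[s, t] | s t. (s, t) \<in> E} \<and>
        bij_betw h (S // E) (UNIV :: 'b set) \<and>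
        (\<forall>R. definable0 LM M (snd LN R)
               {ss. length ss = snd LN R \<and> set ss \<subseteq> S \<and>
                    snd N R (map (\<lambda>s. h (E `` {s})) ss)}) \<and>
        (\<forall>f. definable0 LM M (Suc (fst LN f))
               {ss @ [t] | ss t. length ss = fst LN f \<and> set ss \<subseteq> S \<and> t \<in> S \<and>
                    h (E `` {t}) = fst N f (map (\<lambda>s. h (E `` {s})) ss)}))"

text \<open>Variable 0 plays the role of the single variable x.
  The L(U)-formulas \<phi>_i(x) are given by L-formulas \<theta> i evaluated under a common
  parameter assignment c (their variables other than 0 are parameters);
  \<psi>(x;y) is an L-formula whose variables other than 0 form y, and b_j is given by
  the assignment b j. Consistency with Th(M) in the monster model is expressed,
  via compactness, as finite satisfiability in M of the set of conditions
  "\<exists>x. \<phi>_{i0}(x) \<and> \<psi>(x;b_{j0}) \<and> \<And>_{i\<in>I-{i0}} \<not>\<phi>_i(x) \<and> \<And>_{j\<in>J-{j0}} \<not>\<psi>(x;b_j)"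
  (I, J finite) in the parameter variables.\<close>
definition dp_small :: "('f, 'r) lang \<Rightarrow> ('f, 'r, 'a) struc \<Rightarrow> bool" where
  "dp_small L M \<longleftrightarrow>
     \<not> (\<exists>(\<theta> :: nat \<Rightarrow> ('f, 'r) fm) (\<psi> :: ('f, 'r) fm).
          (\<forall>i. wf_fm L (\<theta> i)) \<and> wf_fm L \<psi> \<and>
          (\<forall>F :: (nat \<times> nat \<times> nat set \<times> nat set) set.
             finite F \<and> (\<forall>(i0, j0, I, J) \<in> F. finite I \<and> finite J) \<longrightarrow>
             (\<exists>(c :: nat \<Rightarrow> 'a) (b :: nat \<Rightarrow> nat \<Rightarrow> 'a).
                \<forall>(i0, j0, I, J) \<in> F. \<exists>a.
                   sat M (c(0 := a)) (\<theta> i0) \<and> sat M ((b j0)(0 := a)) \<psi> \<and>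
                   (\<forall>i \<in> I - {i0}. \<not> sat M (c(0 := a)) (\<theta> i)) \<and>
                   (\<forall>j \<in> J - {j0}. \<not> sat M ((b j)(0 := a)) \<psi>))))"

end

theory Submission
  imports Defs
begin

lemma eval_trm_cong: "(\<forall>x\<in>fv_trm t. e x = e' x) \<Longrightarrow> eval_trm F e t = eval_trm F e' t"
proof (induction t)
  case (Fn f ts)
  then have "map (eval_trm F e) ts = map (eval_trm F e') ts" by (intro map_cong) auto
  then show ?case by (simp only: eval_trm.simps)
qed simp

lemma sat_cong: "(\<forall>x\<in>fv_fm p. e x = e' x) \<Longrightarrow> sat M e p = sat M e' p"
proof (induction p arbitrary: e e')
  case (Eq s t) then show ?case using eval_trm_cong[of s e e'] eval_trm_cong[of t e e'] by auto
next
  case (Rel r ts)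
  then have "map (eval_trm (fst M) e) ts = map (eval_trm (fst M) e') ts"
    by (intro map_cong refl eval_trm_cong) auto
  then show ?case by (simp only: sat.simps)
next
  case (Ex n p)
  then have "\<And>a. sat M (e(n:=a)) p = sat M (e'(n:=a)) p" by (intro Ex.IH) auto
  then show ?case by simp
next
  case (Conj p q)
  have "sat M e p = sat M e' p" using Conj.IH(1) Conj.prems by auto
  moreover have "sat M e q = sat M e' q" using Conj.IH(2) Conj.prems by auto
  ultimately show ?case by simp
qed auto

lemma finite_fv_trm: "finite (fv_trm t)" by (induction t) auto
lemma finite_fv_fm: "finite (fv_fm p)" by (induction p) (auto simp: finite_fv_trm)

fun ren_trm :: "(nat \<Rightarrow> nat) \<Rightarrow> 'f trm \<Rightarrow> 'f trm" where
  "ren_trm \<rho> (Var n) = Var (\<rho> n)"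
| "ren_trm \<rho> (Fn f ts) = Fn f (map (ren_trm \<rho>) ts)"

lemma eval_ren: "eval_trm F e (ren_trm \<rho> t) = eval_trm F ((\<lambda>x. e (\<rho> x))) t"
proof (induction t)
  case (Fn f ts)
  then have "map ((\<lambda>t. eval_trm F e (ren_trm \<rho> t))) ts = map (eval_trm F ((\<lambda>x. e (\<rho> x)))) ts" by (intro map_cong) auto
  then show ?case by (simp only: eval_trm.simps ren_trm.simps map_map o_def)
qed simp
lemma wf_ren: "wf_trm ar (ren_trm \<rho> t) = wf_trm ar t" by (induction t) auto

definition Dfn :: "('f, 'r) lang \<Rightarrow> ('f, 'r, 'a) struc \<Rightarrow> ((nat \<Rightarrow> 'a) \<Rightarrow> bool) \<Rightarrow> bool" where
  "Dfn L M P \<longleftrightarrow> (\<exists>\<phi>. wf_fm L \<phi> \<and> (\<forall>e. sat M e \<phi> = P e))"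

lemma ren_fm: "wf_fm L \<phi> \<Longrightarrow> \<exists>\<phi>'. wf_fm L \<phi>' \<and> (\<forall>e. sat M e \<phi>' = sat M ((\<lambda>x. e (\<rho> x))) \<phi>)"
proof (induction \<phi> arbitrary: \<rho>)
  case (Eq s t) show ?case
    by (rule exI[of _ "Eq (ren_trm \<rho> s) (ren_trm \<rho> t)"]) (use Eq in \<open>auto simp: eval_ren wf_ren\<close>)
next
  case (Rel r ts) show ?case
    by (rule exI[of _ "Rel r (map (ren_trm \<rho>) ts)"]) (use Rel in \<open>auto simp: eval_ren wf_ren o_def\<close>)
next
  case (Neg p) then obtain p' where "wf_fm L p'" "\<forall>e. sat M e p' = sat M ((\<lambda>x. e (\<rho> x))) p" by fastforce
  then show ?case by (intro exI[of _ "Neg p'"]) auto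
next
  case (Conj p q)
  from Conj obtain p' where p': "wf_fm L p'" "\<forall>e. sat M e p' = sat M ((\<lambda>x. e (\<rho> x))) p" by fastforce
  from Conj obtain q' where q': "wf_fm L q'" "\<forall>e. sat M e q' = sat M ((\<lambda>x. e (\<rho> x))) q" by fastforce
  from p' q' show ?case by (intro exI[of _ "Conj p' q'"]) auto
next
  case (Ex n p)
  have "finite (\<rho> ` (fv_fm p - {n}))" by (simp add: finite_fv_fm)
  then obtain m where m: "m \<notin> \<rho> ` (fv_fm p - {n})" using ex_new_if_finite infinite_UNIV_nat by blast
  from Ex obtain p' where p': "wf_fm L p'" "\<forall>e. sat M e p' = sat M (\<lambda>x. e ((\<rho>(n:=m)) x)) p" by fastforce
  have "sat M (\<lambda>x. (e(m:=a)) ((\<rho>(n:=m)) x)) p = sat M (((\<lambda>x. e (\<rho> x)))(n:=a)) p" for e a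
    by (rule sat_cong) (use m in auto)
  then show ?case using p' by (intro exI[of _ "Ex m p'"]) auto
qed

lemma Dfn_ren: "Dfn L M P \<Longrightarrow> Dfn L M (\<lambda>e. P ((\<lambda>x. e (\<rho> x))))"
  unfolding Dfn_def by (metis ren_fm)

lemma Dfn_Neg: "Dfn L M P \<Longrightarrow> Dfn L M (\<lambda>e. \<not> P e)"
  unfolding Dfn_def by (metis sat.simps(3) wf_fm.simps(3))

lemma Dfn_Conj: "Dfn L M P \<Longrightarrow> Dfn L M Q \<Longrightarrow> Dfn L M (\<lambda>e. P e \<and> Q e)"
  unfolding Dfn_def by (metis sat.simps(4) wf_fm.simps(4))

lemma Dfn_Ex: "Dfn L M P \<Longrightarrow> Dfn L M (\<lambda>e. \<exists>a. P (e(n:=a)))"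
  unfolding Dfn_def by (metis sat.simps(5) wf_fm.simps(5))

lemma Dfn_True: "Dfn L M (\<lambda>e. True)"
  unfolding Dfn_def by (rule exI[of _ "Eq (Var 0) (Var 0)"]) simp

lemma Dfn_ex1: assumes "Dfn L M (\<lambda>e. P (e 0) (\<lambda>x. e (Suc x)))" shows "Dfn L M (\<lambda>e. \<exists>a. P a e)"
proof -
  have "Dfn L M (\<lambda>e. \<exists>a. P ((e(0:=a)) 0) (\<lambda>x. (e(0:=a)) (Suc x)))" by (rule Dfn_Ex[OF assms])
  then have "Dfn L M (\<lambda>e. \<exists>a. P a (\<lambda>x. e (Suc x)))" by simp
  from Dfn_ren[OF this, of "\<lambda>x. x - 1"] show ?thesis by (simp add: o_def)
qed

lemma Dfn_exlist: "Dfn L M (\<lambda>e. P (map e [0..<k]) (\<lambda>x. e (x + k))) \<Longrightarrow> Dfn L M (\<lambda>e. \<exists>as. length as = k \<and> P as e)"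
proof (induction k arbitrary: P)
  case 0 then show ?case by simp
next
  case (Suc k)
  have mp: "map e [0..<Suc k] = e 0 # map (\<lambda>x. e (Suc x)) [0..<k]" for e
    by (induction k) auto
  have "Dfn L M (\<lambda>e. (\<lambda>a g. P (a # map g [0..<k]) (\<lambda>x. g (x + k))) (e 0) (\<lambda>x. e (Suc x)))"
    using Suc.prems by (simp only: mp add_Suc_right)
  from Dfn_ex1[OF this] have "Dfn L M (\<lambda>e. \<exists>a. P (a # map e [0..<k]) (\<lambda>x. e (x + k)))" .
  from Suc.IH[of "\<lambda>as e. \<exists>a. P (a # as) e", OF this]
  have "Dfn L M (\<lambda>e. \<exists>as. length as = k \<and> (\<exists>a. P (a # as) e))" .
  moreover have "(\<exists>as. length as = Suc k \<and> P as e) = (\<exists>as. length as = k \<and> (\<exists>a. P (a # as) e))" for e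
    by (auto simp: length_Suc_conv)
  ultimately show ?case by simp
qed

lemma Dfn_all_lt: "(\<forall>i<(k::nat). Dfn L M (Q i)) \<longrightarrow> Dfn L M (\<lambda>e. \<forall>i<k. Q i e)"
proof (induction k)
  case 0 then show ?case by (simp add: Dfn_True)
next
  case (Suc k)
  show ?case
  proof
    assume A: "\<forall>i<Suc k. Dfn L M (Q i)"
    have "Dfn L M (\<lambda>e. (\<forall>i<k. Q i e) \<and> Q k e)" using Suc.IH A by (intro Dfn_Conj) auto
    moreover have "(\<lambda>e. (\<forall>i<k. Q i e) \<and> Q k e) = (\<lambda>e. \<forall>i<Suc k. Q i e)"
      by (auto simp: less_Suc_eq)
    ultimately show "Dfn L M (\<lambda>e. \<forall>i<Suc k. Q i e)" by simp
  qed
qed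

lemma Dfn_def0: assumes "definable0 L M k X" "length vs = k" shows "Dfn L M (\<lambda>e. map e vs \<in> X)"
proof -
  obtain \<phi> where \<phi>: "wf_fm L \<phi>" "fv_fm \<phi> \<subseteq> {..<k}" "X = {as. length as = k \<and> sat M (\<lambda>i. as ! i) \<phi>}"
    using assms(1) unfolding definable0_def by blast
  have "sat M e \<phi> = (map e [0..<k] \<in> X)" for e
  proof -
    have "sat M e \<phi> = sat M (\<lambda>i. map e [0..<k] ! i) \<phi>" by (rule sat_cong) (use \<phi>(2) in auto)
    then show ?thesis using \<phi>(3) by simp
  qed
  then have "Dfn L M (\<lambda>e. map e [0..<k] \<in> X)" using \<phi>(1) unfolding Dfn_def by blast
  from Dfn_ren[OF this, of "\<lambda>i. vs ! i"] have "Dfn L M (\<lambda>e. map (\<lambda>i. e (vs ! i)) [0..<k] \<in> X)" .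
  moreover have eq: "map (\<lambda>i. e (vs ! i)) [0..<k] = map e vs" for e using assms(2) by (intro nth_equalityI) auto
  ultimately show ?thesis by (simp only: eq)
qed

locale interp =
  fixes LM :: "('f, 'r) lang" and M :: "('f, 'r, 'a) struc"
    and LN :: "('g, 's) lang" and N :: "('g, 's, 'b) struc"
    and S :: "'a set" and E :: "('a \<times> 'a) set" and h :: "'a set \<Rightarrow> 'b"
  assumes S_def0: "definable0 LM M 1 {[s] | s. s \<in> S}"
  and eqv: "equiv S E"
  and E_def0: "definable0 LM M 2 {[s, t] | s t. (s, t) \<in> E}"
  and bij: "bij_betw h (S // E) (UNIV :: 'b set)"
  and R_def0: "\<And>R. definable0 LM M (snd LN R) {ss. length ss = snd LN R \<and> set ss \<subseteq> S \<and> snd N R (map (\<lambda>s. h (E `` {s})) ss)}"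
  and F_def0: "\<And>f. definable0 LM M (Suc (fst LN f)) {ss @ [t] | ss t. length ss = fst LN f \<and> set ss \<subseteq> S \<and> t \<in> S \<and> h (E `` {t}) = fst N f (map (\<lambda>s. h (E `` {s})) ss)}"
begin

abbreviation prj :: "'a \<Rightarrow> 'b" where "prj s \<equiv> h (E `` {s})"

lemma rep_ex: "\<exists>s. s \<in> S \<and> prj s = b"
proof -
  have "b \<in> h ` (S // E)" using bij by (simp add: bij_betw_def)
  then obtain C where C: "C \<in> S // E" "h C = b" by blast
  then obtain s where "s \<in> S" "C = E `` {s}" by (auto elim: quotientE)
  then show ?thesis using C by blast
qed

definition rep :: "'b \<Rightarrow> 'a" where "rep b = (SOME s. s \<in> S \<and> prj s = b)"

lemma rep: "rep b \<in> S" "prj (rep b) = b"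
  using someI_ex[OF rep_ex[of b]] unfolding rep_def by auto

lemma prj_eq: "s \<in> S \<Longrightarrow> t \<in> S \<Longrightarrow> prj s = prj t \<longleftrightarrow> (s, t) \<in> E"
proof -
  assume st: "s \<in> S" "t \<in> S"
  have inj: "inj_on h (S // E)" using bij by (simp add: bij_betw_def)
  have "E `` {s} \<in> S // E" "E `` {t} \<in> S // E" using st by (auto intro: quotientI)
  then have "prj s = prj t \<longleftrightarrow> E `` {s} = E `` {t}" using inj by (auto dest: inj_onD)
  also have "\<dots> \<longleftrightarrow> (s, t) \<in> E" using eqv st by (simp add: equiv_class_eq_iff)
  finally show ?thesis .
qed

lemma Sm: "Dfn LM M (\<lambda>e. e v \<in> S)"
proof -
  have "Dfn LM M (\<lambda>e. map e [v] \<in> {[s] | s. s \<in> S})" by (rule Dfn_def0[OF S_def0]) simp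
  then show ?thesis by simp
qed

lemma Em: "Dfn LM M (\<lambda>e. (e u, e v) \<in> E)"
proof -
  have "Dfn LM M (\<lambda>e. map e [u, v] \<in> {[s, t] | s t. (s, t) \<in> E})" by (rule Dfn_def0[OF E_def0]) simp
  then show ?thesis by simp
qed

lemma trm_tr: "wf_trm (fst LN) t \<Longrightarrow> \<exists>T. Dfn LM M T \<and>
   (\<forall>e. (\<forall>x. e x \<in> S) \<longrightarrow> (T e \<longleftrightarrow> prj (e 0) = eval_trm (fst N) (\<lambda>x. prj (e (Suc x))) t))"
proof (induction t)
  case (Var n)
  show ?case by (rule exI[of _ "\<lambda>e. (e 0, e (Suc n)) \<in> E"]) (auto simp: Em prj_eq)
next
  case (Fn f ts)
  define k where "k = length ts"
  have wf: "k = fst LN f" "\<forall>t\<in>set ts. wf_trm (fst LN) t" using Fn.prems by (auto simp: k_def)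
  have "\<forall>i<k. \<exists>T. Dfn LM M T \<and> (\<forall>e. (\<forall>x. e x \<in> S) \<longrightarrow> (T e \<longleftrightarrow> prj (e 0) = eval_trm (fst N) (\<lambda>x. prj (e (Suc x))) (ts ! i)))"
    using Fn.IH wf by (auto simp: k_def)
  then obtain T where T: "\<forall>i<k. Dfn LM M (T i) \<and> (\<forall>e. (\<forall>x. e x \<in> S) \<longrightarrow> (T i e \<longleftrightarrow> prj (e 0) = eval_trm (fst N) (\<lambda>x. prj (e (Suc x))) (ts ! i)))"
    by metis
  define G where "G = {ss @ [t] | ss t. length ss = fst LN f \<and> set ss \<subseteq> S \<and> t \<in> S \<and> h (E `` {t}) = fst N f (map (\<lambda>s. h (E `` {s})) ss)}"
  define Pl where "Pl = (\<lambda>as e. (\<forall>i<k. as ! i \<in> S) \<and> as @ [e 0] \<in> G \<and> (\<forall>i<k. T i ((e :: nat \<Rightarrow> 'a)(0 := as ! i))))"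
  have d1: "Dfn LM M (\<lambda>e'. \<forall>i<k. e' i \<in> S)" by (rule Dfn_all_lt[rule_format]) (simp add: Sm)
  have d2: "Dfn LM M (\<lambda>e'. map e' [0..<Suc k] \<in> G)" unfolding G_def by (rule Dfn_def0[OF F_def0]) (simp add: wf)
  have d3: "Dfn LM M (\<lambda>e'. \<forall>i<k. T i (\<lambda>x. e' (if x = 0 then i else x + k)))"
  proof (rule Dfn_all_lt[rule_format])
    fix i assume "i < k"
    then show "Dfn LM M (\<lambda>e'. T i (\<lambda>x. e' (if x = 0 then i else x + k)))"
      using Dfn_ren[of LM M "T i" "\<lambda>x. if x = 0 then i else x + k"] T by auto
  qed
  have "Dfn LM M (\<lambda>e'. Pl (map e' [0..<k]) (\<lambda>x. e' (x + k)))"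
  proof -
    have f1: "Dfn LM M (\<lambda>e'. (\<forall>i<k. e' i \<in> S) \<and> map e' [0..<Suc k] \<in> G \<and> (\<forall>i<k. T i (\<lambda>x. e' (if x = 0 then i else x + k))))"
      using d1 d2 d3 by (intro Dfn_Conj)
    moreover have fe: "(\<lambda>x. e' (if x = 0 then i else x + k)) = (\<lambda>x. e' (x + k))(0 := map e' [0..<k] ! i)" if "i < k" for e' i
      using that by (auto simp: fun_eq_iff)
    then have fe2: "(\<forall>i<k. T i (\<lambda>x. e' (if x = 0 then i else x + k))) = (\<forall>i<k. T i ((\<lambda>x. e' (x + k))(0 := map e' [0..<k] ! i)))" for e'
      by (intro all_cong1 imp_cong refl arg_cong[where f="T _"] fe)
    have fm: "map e' [0..<Suc k] = map e' [0..<k] @ [(\<lambda>x. e' (x + k)) 0]" for e' by simp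
    have fs: "(\<forall>i<k. map e' [0..<k] ! i \<in> S) = (\<forall>i<k. e' i \<in> S)" for e' by auto
    have eq: "(\<lambda>e'. Pl (map e' [0..<k]) (\<lambda>x. e' (x + k))) = (\<lambda>e'. (\<forall>i<k. e' i \<in> S) \<and> map e' [0..<Suc k] \<in> G \<and> (\<forall>i<k. T i (\<lambda>x. e' (if x = 0 then i else x + k))))"
      unfolding Pl_def by (rule ext) (simp only: fe2 fm fs add_0)
    show ?thesis by (subst eq) (rule f1)
  qed
  from Dfn_exlist[OF this] have D: "Dfn LM M (\<lambda>e. \<exists>as. length as = k \<and> Pl as e)" .
  show ?case
  proof (rule exI, rule conjI[OF D], intro allI impI)
    fix e :: "nat \<Rightarrow> 'a" assume eS: "\<forall>x. e x \<in> S"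
    let ?ev = "eval_trm (fst N) (\<lambda>x. prj (e (Suc x)))"
    show "(\<exists>as. length as = k \<and> Pl as e) \<longleftrightarrow> prj (e 0) = eval_trm (fst N) (\<lambda>x. prj (e (Suc x))) (Fn f ts)"
    proof
      assume "\<exists>as. length as = k \<and> Pl as e"
      then obtain as where as: "length as = k" "Pl as e" by blast
      have asS: "\<forall>i<k. as ! i \<in> S" using as unfolding Pl_def by blast
      have "as @ [e 0] \<in> G" using as unfolding Pl_def by blast
      then have g: "prj (e 0) = fst N f (map prj as)" unfolding G_def by auto
      have "\<forall>i<k. T i (e(0 := as ! i))" using as unfolding Pl_def by blast
      then have "\<forall>i<k. prj (as ! i) = ?ev (ts ! i)" using T asS eS by auto
      then have "map prj as = map ?ev ts" using as(1) by (intro nth_equalityI) (auto simp: k_def)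
      then show "prj (e 0) = eval_trm (fst N) (\<lambda>x. prj (e (Suc x))) (Fn f ts)" using g by simp
    next
      assume H: "prj (e 0) = eval_trm (fst N) (\<lambda>x. prj (e (Suc x))) (Fn f ts)"
      define as where "as = map (\<lambda>t. rep (?ev t)) ts"
      have len: "length as = k" by (simp add: as_def k_def)
      have asS: "\<forall>i<k. as ! i \<in> S" by (simp add: as_def k_def rep)
      have mp: "map prj as = map ?ev ts" by (simp add: as_def rep)
      have "as @ [e 0] \<in> G" unfolding G_def using len asS eS H mp wf
        by (auto simp: in_set_conv_nth)
      moreover have "\<forall>i<k. T i (e(0 := as ! i))"
        using T asS eS by (auto simp: as_def k_def rep)
      ultimately show "\<exists>as. length as = k \<and> Pl as e" using len asS unfolding Pl_def by blast
    qed
  qed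
qed

lemma cn: "case_nat (e 0) (\<lambda>x. e (Suc x)) = e"
  by (rule ext) (simp split: nat.split)

lemma fm_tr: "wf_fm LN \<phi> \<Longrightarrow> \<exists>P. Dfn LM M P \<and> (\<forall>e. (\<forall>x. e x \<in> S) \<longrightarrow> (P e \<longleftrightarrow> sat N (\<lambda>x. prj (e x)) \<phi>))"
proof (induction \<phi>)
  case (Eq s t)
  obtain Ts where Ts: "Dfn LM M Ts" "\<forall>e. (\<forall>x. e x \<in> S) \<longrightarrow> (Ts e \<longleftrightarrow> prj (e 0) = eval_trm (fst N) (\<lambda>x. prj (e (Suc x))) s)"
    using trm_tr[of s] Eq.prems by auto
  obtain Tt where Tt: "Dfn LM M Tt" "\<forall>e. (\<forall>x. e x \<in> S) \<longrightarrow> (Tt e \<longleftrightarrow> prj (e 0) = eval_trm (fst N) (\<lambda>x. prj (e (Suc x))) t)"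
    using trm_tr[of t] Eq.prems by auto
  have f1: "Dfn LM M (\<lambda>e'. e' 0 \<in> S \<and> Ts e' \<and> Tt e')" using Sm Ts(1) Tt(1) by (intro Dfn_Conj)
  have "(\<lambda>e'. (\<lambda>a e. a \<in> S \<and> Ts (case_nat a e) \<and> Tt (case_nat a e)) (e' 0) (\<lambda>x. e' (Suc x))) = (\<lambda>e'. e' 0 \<in> S \<and> Ts e' \<and> Tt e')"
  proof (rule ext)
    fix e' :: "nat \<Rightarrow> 'a"
    show "(\<lambda>a e. a \<in> S \<and> Ts (case_nat a e) \<and> Tt (case_nat a e)) (e' 0) (\<lambda>x. e' (Suc x)) = (e' 0 \<in> S \<and> Ts e' \<and> Tt e')"
      by (simp only: cn)
  qed
  with f1 have "Dfn LM M (\<lambda>e'. (\<lambda>a e. a \<in> S \<and> Ts (case_nat a e) \<and> Tt (case_nat a e)) (e' 0) (\<lambda>x. e' (Suc x)))" by simp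
  from Dfn_ex1[OF this] have D: "Dfn LM M (\<lambda>e. \<exists>a. a \<in> S \<and> Ts (case_nat a e) \<and> Tt (case_nat a e))" .
  show ?case
  proof (rule exI, rule conjI[OF D], intro allI impI)
    fix e :: "nat \<Rightarrow> 'a" assume eS: "\<forall>x. e x \<in> S"
    have cS: "\<forall>x. case_nat a e x \<in> S" if "a \<in> S" for a using that eS by (simp split: nat.split)
    have key: "Ts (case_nat a e) \<longleftrightarrow> prj a = eval_trm (fst N) (\<lambda>x. prj (e x)) s"
      "Tt (case_nat a e) \<longleftrightarrow> prj a = eval_trm (fst N) (\<lambda>x. prj (e x)) t" if "a \<in> S" for a
      using mp[OF spec[OF Ts(2), of "case_nat a e"] cS[OF that]] mp[OF spec[OF Tt(2), of "case_nat a e"] cS[OF that]] by simp_all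
    show "(\<exists>a. a \<in> S \<and> Ts (case_nat a e) \<and> Tt (case_nat a e)) \<longleftrightarrow> sat N (\<lambda>x. prj (e x)) (Eq s t)"
    proof
      assume "\<exists>a. a \<in> S \<and> Ts (case_nat a e) \<and> Tt (case_nat a e)"
      then show "sat N (\<lambda>x. prj (e x)) (Eq s t)" using key by auto
    next
      assume H: "sat N (\<lambda>x. prj (e x)) (Eq s t)"
      let ?a = "rep (eval_trm (fst N) (\<lambda>x. prj (e x)) s)"
      have "?a \<in> S \<and> Ts (case_nat ?a e) \<and> Tt (case_nat ?a e)" using key[OF rep(1)] H by (simp add: rep)
      then show "\<exists>a. a \<in> S \<and> Ts (case_nat a e) \<and> Tt (case_nat a e)" by blast
    qed
  qed
next
  case (Rel R ts)
  define k where "k = length ts"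
  have wf: "k = snd LN R" "\<forall>t\<in>set ts. wf_trm (fst LN) t" using Rel.prems by (auto simp: k_def)
  have "\<forall>i<k. \<exists>T. Dfn LM M T \<and> (\<forall>e. (\<forall>x. e x \<in> S) \<longrightarrow> (T e \<longleftrightarrow> prj (e 0) = eval_trm (fst N) (\<lambda>x. prj (e (Suc x))) (ts ! i)))"
    using trm_tr wf by (auto simp: k_def)
  then obtain T where T: "\<forall>i<k. Dfn LM M (T i) \<and> (\<forall>e. (\<forall>x. e x \<in> S) \<longrightarrow> (T i e \<longleftrightarrow> prj (e 0) = eval_trm (fst N) (\<lambda>x. prj (e (Suc x))) (ts ! i)))"
    by metis
  define RS where "RS = {ss. length ss = snd LN R \<and> set ss \<subseteq> S \<and> snd N R (map (\<lambda>s. h (E `` {s})) ss)}"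
  define Pl where "Pl = (\<lambda>as e. (\<forall>i<k. as ! i \<in> S) \<and> as \<in> RS \<and> (\<forall>i<k. T i (case_nat (as ! i) (e :: nat \<Rightarrow> 'a))))"
  have d1: "Dfn LM M (\<lambda>e'. \<forall>i<k. e' i \<in> S)" by (rule Dfn_all_lt[rule_format]) (simp add: Sm)
  have d2: "Dfn LM M (\<lambda>e'. map e' [0..<k] \<in> RS)" unfolding RS_def by (rule Dfn_def0[OF R_def0]) (simp add: wf)
  have d3: "Dfn LM M (\<lambda>e'. \<forall>i<k. T i (\<lambda>x. e' (case_nat i (\<lambda>y. y + k) x)))"
  proof (rule Dfn_all_lt[rule_format])
    fix i assume "i < k"
    then show "Dfn LM M (\<lambda>e'. T i (\<lambda>x. e' (case_nat i (\<lambda>y. y + k) x)))"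
      using Dfn_ren[of LM M "T i" "case_nat i (\<lambda>y. y + k)"] T by auto
  qed
  have "Dfn LM M (\<lambda>e'. Pl (map e' [0..<k]) (\<lambda>x. e' (x + k)))"
  proof -
    have f1: "Dfn LM M (\<lambda>e'. (\<forall>i<k. e' i \<in> S) \<and> map e' [0..<k] \<in> RS \<and> (\<forall>i<k. T i (\<lambda>x. e' (case_nat i (\<lambda>y. y + k) x))))"
      using d1 d2 d3 by (intro Dfn_Conj)
    have fe: "(\<lambda>x. e' (case_nat i (\<lambda>y. y + k) x)) = case_nat (map e' [0..<k] ! i) (\<lambda>x. e' (x + k))" if "i < k" for e' i
      using that by (auto simp: fun_eq_iff split: nat.split)
    then have fe2: "(\<forall>i<k. T i (\<lambda>x. e' (case_nat i (\<lambda>y. y + k) x))) = (\<forall>i<k. T i (case_nat (map e' [0..<k] ! i) (\<lambda>x. e' (x + k))))" for e'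
      by (intro all_cong1 imp_cong refl arg_cong[where f="T _"] fe)
    have fs: "(\<forall>i<k. map e' [0..<k] ! i \<in> S) = (\<forall>i<k. e' i \<in> S)" for e' by auto
    have eq: "(\<lambda>e'. Pl (map e' [0..<k]) (\<lambda>x. e' (x + k))) = (\<lambda>e'. (\<forall>i<k. e' i \<in> S) \<and> map e' [0..<k] \<in> RS \<and> (\<forall>i<k. T i (\<lambda>x. e' (case_nat i (\<lambda>y. y + k) x))))"
      unfolding Pl_def by (rule ext) (simp only: fe2 fs)
    show ?thesis by (subst eq) (rule f1)
  qed
  from Dfn_exlist[OF this] have D: "Dfn LM M (\<lambda>e. \<exists>as. length as = k \<and> Pl as e)" .
  show ?case
  proof (rule exI, rule conjI[OF D], intro allI impI)
    fix e :: "nat \<Rightarrow> 'a" assume eS: "\<forall>x. e x \<in> S"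
    let ?ev = "eval_trm (fst N) (\<lambda>x. prj (e x))"
    have cS: "\<forall>x. case_nat a e x \<in> S" if "a \<in> S" for a using that eS by (simp split: nat.split)
    have key: "T i (case_nat a e) \<longleftrightarrow> prj a = ?ev (ts ! i)" if "a \<in> S" "i < k" for a i
      using T that cS[OF that(1)] by simp
    show "(\<exists>as. length as = k \<and> Pl as e) \<longleftrightarrow> sat N (\<lambda>x. prj (e x)) (Rel R ts)"
    proof
      assume "\<exists>as. length as = k \<and> Pl as e"
      then obtain as where as: "length as = k" "Pl as e" by blast
      have asS: "\<forall>i<k. as ! i \<in> S" using as unfolding Pl_def by blast
      have "as \<in> RS" using as unfolding Pl_def by blast
      then have g: "snd N R (map prj as)" unfolding RS_def by auto
      have "\<forall>i<k. T i (case_nat (as ! i) e)" using as unfolding Pl_def by blast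
      then have "\<forall>i<k. prj (as ! i) = ?ev (ts ! i)" using key asS by auto
      then have "map prj as = map ?ev ts" using as(1) by (intro nth_equalityI) (auto simp: k_def)
      then show "sat N (\<lambda>x. prj (e x)) (Rel R ts)" using g by simp
    next
      assume H: "sat N (\<lambda>x. prj (e x)) (Rel R ts)"
      define as where "as = map (\<lambda>t. rep (?ev t)) ts"
      have len: "length as = k" by (simp add: as_def k_def)
      have asS: "\<forall>i<k. as ! i \<in> S" by (simp add: as_def k_def rep)
      have mp: "map prj as = map ?ev ts" by (simp add: as_def rep)
      have "as \<in> RS" unfolding RS_def using len asS H mp wf
        by (auto simp: in_set_conv_nth)
      moreover have "\<forall>i<k. T i (case_nat (as ! i) e)"
        using key asS by (auto simp: as_def k_def rep)
      ultimately show "\<exists>as. length as = k \<and> Pl as e" using len asS unfolding Pl_def by blast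
    qed
  qed
next
  case (Neg p)
  then obtain P where P: "Dfn LM M P" "\<forall>e. (\<forall>x. e x \<in> S) \<longrightarrow> (P e \<longleftrightarrow> sat N (\<lambda>x. prj (e x)) p)" by auto
  show ?case by (rule exI[of _ "\<lambda>e. \<not> P e"]) (use P Dfn_Neg[OF P(1)] in auto)
next
  case (Conj p q)
  then obtain P where P: "Dfn LM M P" "\<forall>e. (\<forall>x. e x \<in> S) \<longrightarrow> (P e \<longleftrightarrow> sat N (\<lambda>x. prj (e x)) p)" by auto
  from Conj obtain Q where Q: "Dfn LM M Q" "\<forall>e. (\<forall>x. e x \<in> S) \<longrightarrow> (Q e \<longleftrightarrow> sat N (\<lambda>x. prj (e x)) q)" by auto
  show ?case by (rule exI[of _ "\<lambda>e. P e \<and> Q e"]) (use P Q Dfn_Conj[OF P(1) Q(1)] in auto)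
next
  case (Ex n p)
  then obtain P where P: "Dfn LM M P" "\<forall>e. (\<forall>x. e x \<in> S) \<longrightarrow> (P e \<longleftrightarrow> sat N (\<lambda>x. prj (e x)) p)" by auto
  have "Dfn LM M (\<lambda>e. \<exists>a. (e(n:=a)) n \<in> S \<and> P (e(n:=a)))" by (rule Dfn_Ex[OF Dfn_Conj[OF Sm P(1)]])
  then have D: "Dfn LM M (\<lambda>e. \<exists>a. a \<in> S \<and> P (e(n:=a)))" by simp
  show ?case
  proof (rule exI, rule conjI[OF D], intro allI impI)
    fix e :: "nat \<Rightarrow> 'a" assume eS: "\<forall>x. e x \<in> S"
    have fu: "(\<lambda>x. prj ((e(n:=a)) x)) = (\<lambda>x. prj (e x))(n := prj a)" for a by (auto simp: fun_eq_iff)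
    have key: "P (e(n:=a)) \<longleftrightarrow> sat N ((\<lambda>x. prj (e x))(n := prj a)) p" if "a \<in> S" for a
    proof -
      have A: "\<forall>x. (e(n:=a)) x \<in> S" using eS that by simp
      have "P (e(n:=a)) \<longleftrightarrow> sat N (\<lambda>x. prj ((e(n:=a)) x)) p" using mp[OF spec[OF P(2), of "e(n:=a)"] A] .
      then show ?thesis by (simp only: fu)
    qed
    show "(\<exists>a. a \<in> S \<and> P (e(n:=a))) \<longleftrightarrow> sat N (\<lambda>x. prj (e x)) (Ex n p)"
    proof
      assume "\<exists>a. a \<in> S \<and> P (e(n:=a))"
      then show "sat N (\<lambda>x. prj (e x)) (Ex n p)" using key by auto
    next
      assume "sat N (\<lambda>x. prj (e x)) (Ex n p)"
      then obtain b where "sat N ((\<lambda>x. prj (e x))(n := b)) p" by auto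
      then have "rep b \<in> S \<and> P (e(n:=rep b))" by (simp only: key[OF rep(1)] rep simp_thms)
      then show "\<exists>a. a \<in> S \<and> P (e(n:=a))" by blast
    qed
  qed
qed

lemma fm_tr_rep: "wf_fm LN \<phi> \<Longrightarrow> \<exists>\<phi>'. wf_fm LM \<phi>' \<and> (\<forall>g. sat M (\<lambda>x. rep (g x)) \<phi>' \<longleftrightarrow> sat N g \<phi>)"
proof -
  assume "wf_fm LN \<phi>"
  then obtain P where P: "Dfn LM M P" "\<forall>e. (\<forall>x. e x \<in> S) \<longrightarrow> (P e \<longleftrightarrow> sat N (\<lambda>x. prj (e x)) \<phi>)"
    using fm_tr by blast
  obtain \<phi>' where \<phi>': "wf_fm LM \<phi>'" "\<forall>e. sat M e \<phi>' = P e" using P(1) unfolding Dfn_def by blast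
  have "sat M (\<lambda>x. rep (g x)) \<phi>' \<longleftrightarrow> sat N g \<phi>" for g
    using \<phi>'(2) spec[OF P(2), of "\<lambda>x. rep (g x)"] by (simp add: rep)
  then show ?thesis using \<phi>'(1) by blast
qed

end

theorem lemma2p6:
  fixes LM :: "('f, 'r) lang" and M :: "('f, 'r, 'a) struc"
    and LN :: "('g, 's) lang" and N :: "('g, 's, 'b) struc"
  assumes "simply_interprets0 LM M LN N"
    and "dp_small LM M"
  shows "dp_small LN N"
proof -
  have "\<exists>S E h. interp LM M LN N S E h"
    using assms(1) unfolding simply_interprets0_def interp_def by (simp only: conj_assoc)
  then obtain S E h where "interp LM M LN N S E h" by blast
  then interpret I: interp LM M LN N S E h .
  show ?thesis unfolding dp_small_def
  proof
    assume "\<exists>(\<theta> :: nat \<Rightarrow> ('g, 's) fm) (\<psi> :: ('g, 's) fm).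
          (\<forall>i. wf_fm LN (\<theta> i)) \<and> wf_fm LN \<psi> \<and>
          (\<forall>F :: (nat \<times> nat \<times> nat set \<times> nat set) set.
             finite F \<and> (\<forall>(i0, j0, I, J) \<in> F. finite I \<and> finite J) \<longrightarrow>
             (\<exists>(c :: nat \<Rightarrow> 'b) (b :: nat \<Rightarrow> nat \<Rightarrow> 'b).
                \<forall>(i0, j0, I, J) \<in> F. \<exists>a.
                   sat N (c(0 := a)) (\<theta> i0) \<and> sat N ((b j0)(0 := a)) \<psi> \<and>
                   (\<forall>i \<in> I - {i0}. \<not> sat N (c(0 := a)) (\<theta> i)) \<and>
                   (\<forall>j \<in> J - {j0}. \<not> sat N ((b j)(0 := a)) \<psi>)))"
    then obtain \<theta> :: "nat \<Rightarrow> ('g, 's) fm" and \<psi> :: "('g, 's) fm" where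
      w\<theta>: "\<forall>i. wf_fm LN (\<theta> i)" and w\<psi>: "wf_fm LN \<psi>" and
      H: "\<forall>F :: (nat \<times> nat \<times> nat set \<times> nat set) set.
             finite F \<and> (\<forall>(i0, j0, I, J) \<in> F. finite I \<and> finite J) \<longrightarrow>
             (\<exists>(c :: nat \<Rightarrow> 'b) (b :: nat \<Rightarrow> nat \<Rightarrow> 'b).
                \<forall>(i0, j0, I, J) \<in> F. \<exists>a.
                   sat N (c(0 := a)) (\<theta> i0) \<and> sat N ((b j0)(0 := a)) \<psi> \<and>
                   (\<forall>i \<in> I - {i0}. \<not> sat N (c(0 := a)) (\<theta> i)) \<and>
                   (\<forall>j \<in> J - {j0}. \<not> sat N ((b j)(0 := a)) \<psi>))"
      by (elim exE conjE) (rule that)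
    have "\<forall>i. \<exists>\<phi>'. wf_fm LM \<phi>' \<and> (\<forall>g. sat M (\<lambda>x. I.rep (g x)) \<phi>' \<longleftrightarrow> sat N g (\<theta> i))"
    proof (rule allI)
      fix i show "\<exists>\<phi>'. wf_fm LM \<phi>' \<and> (\<forall>g. sat M (\<lambda>x. I.rep (g x)) \<phi>' \<longleftrightarrow> sat N g (\<theta> i))"
        by (rule I.fm_tr_rep) (rule spec[OF w\<theta>])
    qed
    from choice[OF this] obtain \<theta>' where \<theta>': "\<forall>i. wf_fm LM (\<theta>' i) \<and> (\<forall>g. sat M (\<lambda>x. I.rep (g x)) (\<theta>' i) \<longleftrightarrow> sat N g (\<theta> i))"
      by (elim exE) (rule that)
    obtain \<psi>' where \<psi>': "wf_fm LM \<psi>'" "\<forall>g. sat M (\<lambda>x. I.rep (g x)) \<psi>' \<longleftrightarrow> sat N g \<psi>"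
      using I.fm_tr_rep[OF w\<psi>] by (elim exE conjE) (rule that)
    have upd: "(\<lambda>x. I.rep (g x))(0 := I.rep a) = (\<lambda>x. I.rep ((g(0 := a)) x))" for g :: "nat \<Rightarrow> 'b" and a
      by (auto simp: fun_eq_iff)
    have "\<forall>F :: (nat \<times> nat \<times> nat set \<times> nat set) set.
             finite F \<and> (\<forall>(i0, j0, I, J) \<in> F. finite I \<and> finite J) \<longrightarrow>
             (\<exists>(c :: nat \<Rightarrow> 'a) (b :: nat \<Rightarrow> nat \<Rightarrow> 'a).
                \<forall>(i0, j0, I, J) \<in> F. \<exists>a.
                   sat M (c(0 := a)) (\<theta>' i0) \<and> sat M ((b j0)(0 := a)) \<psi>' \<and>
                   (\<forall>i \<in> I - {i0}. \<not> sat M (c(0 := a)) (\<theta>' i)) \<and>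
                   (\<forall>j \<in> J - {j0}. \<not> sat M ((b j)(0 := a)) \<psi>'))"
    proof (intro allI impI)
      fix F :: "(nat \<times> nat \<times> nat set \<times> nat set) set"
      assume "finite F \<and> (\<forall>(i0, j0, I, J) \<in> F. finite I \<and> finite J)"
      from mp[OF spec[OF H, of F] this] obtain c :: "nat \<Rightarrow> 'b" and b :: "nat \<Rightarrow> nat \<Rightarrow> 'b" where cb:
        "\<forall>(i0, j0, I, J) \<in> F. \<exists>a.
                   sat N (c(0 := a)) (\<theta> i0) \<and> sat N ((b j0)(0 := a)) \<psi> \<and>
                   (\<forall>i \<in> I - {i0}. \<not> sat N (c(0 := a)) (\<theta> i)) \<and>
                   (\<forall>j \<in> J - {j0}. \<not> sat N ((b j)(0 := a)) \<psi>)" by (elim exE) (rule that)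
      show "\<exists>(c :: nat \<Rightarrow> 'a) (b :: nat \<Rightarrow> nat \<Rightarrow> 'a).
                \<forall>(i0, j0, I, J) \<in> F. \<exists>a.
                   sat M (c(0 := a)) (\<theta>' i0) \<and> sat M ((b j0)(0 := a)) \<psi>' \<and>
                   (\<forall>i \<in> I - {i0}. \<not> sat M (c(0 := a)) (\<theta>' i)) \<and>
                   (\<forall>j \<in> J - {j0}. \<not> sat M ((b j)(0 := a)) \<psi>')"
      proof (intro exI[of _ "\<lambda>x. I.rep (c x)"] exI[of _ "\<lambda>j x. I.rep (b j x)"] ballI)
        fix q assume q: "q \<in> F"
        obtain i0 j0 I J where qe: "q = (i0, j0, I, J)" by (cases q) auto
        from bspec[OF cb q] obtain a where a:
          "sat N (c(0 := a)) (\<theta> i0)" "sat N ((b j0)(0 := a)) \<psi>"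
          "\<forall>i \<in> I - {i0}. \<not> sat N (c(0 := a)) (\<theta> i)"
          "\<forall>j \<in> J - {j0}. \<not> sat N ((b j)(0 := a)) \<psi>" unfolding qe prod.case by (elim exE conjE) (rule that)
        have "sat M ((\<lambda>x. I.rep (c x))(0 := I.rep a)) (\<theta>' i0) \<and> sat M ((\<lambda>x. I.rep (b j0 x))(0 := I.rep a)) \<psi>' \<and>
                   (\<forall>i \<in> I - {i0}. \<not> sat M ((\<lambda>x. I.rep (c x))(0 := I.rep a)) (\<theta>' i)) \<and>
                   (\<forall>j \<in> J - {j0}. \<not> sat M ((\<lambda>x. I.rep (b j x))(0 := I.rep a)) \<psi>')"
          unfolding upd using a \<theta>' \<psi>'(2) by (simp del: fun_upd_apply)
        then show "case q of (i0, j0, I, J) \<Rightarrow> \<exists>a.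
                   sat M (((\<lambda>x. I.rep (c x)))(0 := a)) (\<theta>' i0) \<and> sat M (((\<lambda>j x. I.rep (b j x)) j0)(0 := a)) \<psi>' \<and>
                   (\<forall>i \<in> I - {i0}. \<not> sat M (((\<lambda>x. I.rep (c x)))(0 := a)) (\<theta>' i)) \<and>
                   (\<forall>j \<in> J - {j0}. \<not> sat M (((\<lambda>j x. I.rep (b j x)) j)(0 := a)) \<psi>')"
          unfolding qe prod.case by (rule exI[of _ "I.rep a"])
      qed
    qed
    note X = this
    show False using assms(2) unfolding dp_small_def
      apply (elim notE)
      apply (rule exI[of _ \<theta>'], rule exI[of _ \<psi>'])
      apply (intro conjI)
        apply (use \<theta>' in blast)
       apply (rule \<psi>'(1))
      apply (rule X)
      done
  qed
qed

end
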